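(* Let $(W,S)$ be a Coxeter system, $x\in S$, $O=S^{\mathrm{odd}}_{\sim x}$ and $E=\{s\in S\smallsetminus O\mid m_{y,s}<\infty \text{ for some } y\in O\}$. If $R_S^x\smallsetminus R_O^x$ is finite, then $E$ is finite.
   Context: $(W,S)$ is a Coxeter system, $S$ possibly infinite; $m_{s,t}$ is the order of $st$ ($m_{s,s}=1$). For $I\subseteq S$, $\Gamma^{\mathrm{odd}}_I$ has vertex set $I$, distinct $s,t$ joined iff $m_{s,t}$ is odd ($\ge3$); $S^{\mathrm{odd}}_{\sim x}$ is the vertex set of the component of $\Gamma^{\mathrm{odd}}_S$ containing $x$. Geometric representation: $V$ has basis $\{\alpha_s\}$ with $\langle\alpha_s,\alpha_t\rangle=-\cos(\pi/m_{s,t})$ ($-1$ if $\infty$); $W$ acts by $s\cdot v=v-2\langle\alpha_s,v\rangle\alpha_s$; $\Phi=W\cdot\{\alpha_s\}$, $\Phi^+$ the roots with all coefficients $\ge0$; for $\gamma=w\cdot\alpha_s$, $s_\gamma=wsw^{-1}$; $\Phi_I=\Phi\cap\mathrm{span}\{\alpha_s:s\in I\}$. For $x\in I\subseteq S$, $\Phi_I^{\perp x}=\{\gamma\in\Phi_I:\langle\gamma,\alpha_x\rangle=0\}$; $\Pi_I^x$ is the set of $\gamma\in\Phi_I^{\perp x}\cap\Phi^+$ which are not positive linear combinations of at least two elements of $\Phi_I^{\perp x}\cap\Phi^+$; and $R_I^x=\{s_\gamma:\gamma\in\Pi_I^x\}$ (the Coxeter generating set of the reflection subgroup $W_I^{\perp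 x}$ generated by $\{s_\gamma:\gamma\in\Phi_I^{\perp x}\}$). *)

theory Defs
  imports Complex_Main "HOL-Library.Extended_Nat"
begin

text \<open>A Coxeter system (W,S) is determined by its Coxeter matrix. We take S to be the
  whole type 'a, and m s t \<in> {1,2,...} \<union> {\<infinity>} the order of st.\<close>

definition coxeter_matrix :: "('a \<Rightarrow> 'a \<Rightarrow> enat) \<Rightarrow> bool" where
  "coxeter_matrix m \<longleftrightarrow>
     (\<forall>s. m s s = 1) \<and> (\<forall>s t. m s t = m t s) \<and> (\<forall>s t. s \<noteq> t \<longrightarrow> m s t \<ge> 2)"

text \<open>Vectors of V are finitely supported functions 'a \<Rightarrow> real (coefficients w.r.t. the basis alpha).\<close>

definition supp :: "('a \<Rightarrow> real) \<Rightarrow> 'a set" where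
  "supp v = {s. v s \<noteq> 0}"

definition alpha :: "'a \<Rightarrow> 'a \<Rightarrow> real" where
  "alpha s = (\<lambda>t. if t = s then 1 else 0)"

definition bil_coeff :: "('a \<Rightarrow> 'a \<Rightarrow> enat) \<Rightarrow> 'a \<Rightarrow> 'a \<Rightarrow> real" where
  "bil_coeff m s t = (case m s t of enat k \<Rightarrow> - cos (pi / real k) | \<infinity> \<Rightarrow> -1)"

definition bform :: "('a \<Rightarrow> 'a \<Rightarrow> enat) \<Rightarrow> ('a \<Rightarrow> real) \<Rightarrow> ('a \<Rightarrow> real) \<Rightarrow> real" where
  "bform m u v = (\<Sum>s\<in>supp u. \<Sum>t\<in>supp v. u s * v t * bil_coeff m s t)"

text \<open>For gamma = alpha s this is the action of s;
  for a root gamma = w alpha s it is the action of s_gamma = w s w^-1 in the (faithful)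
  geometric representation.\<close>

definition refl :: "('a \<Rightarrow> 'a \<Rightarrow> enat) \<Rightarrow> ('a \<Rightarrow> real) \<Rightarrow> ('a \<Rightarrow> real) \<Rightarrow> ('a \<Rightarrow> real)" where
  "refl m \<gamma> v = (\<lambda>t. v t - 2 * bform m \<gamma> v * \<gamma> t)"

text \<open>Phi = W . {alpha s}; W is generated by the simple reflections.\<close>

inductive_set roots :: "('a \<Rightarrow> 'a \<Rightarrow> enat) \<Rightarrow> ('a \<Rightarrow> real) set" for m where
  simple: "alpha s \<in> roots m"
| step: "\<gamma> \<in> roots m \<Longrightarrow> refl m (alpha s) \<gamma> \<in> roots m"

definition pos_roots :: "('a \<Rightarrow> 'a \<Rightarrow> enat) \<Rightarrow> ('a \<Rightarrow> real) set" where
  "pos_roots m = {\<gamma> \<in> roots m. \<forall>s. \<gamma> s \<ge> 0}"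

definition roots_on :: "('a \<Rightarrow> 'a \<Rightarrow> enat) \<Rightarrow> 'a set \<Rightarrow> ('a \<Rightarrow> real) set" where
  "roots_on m I = {\<gamma> \<in> roots m. supp \<gamma> \<subseteq> I}"

definition perp_roots :: "('a \<Rightarrow> 'a \<Rightarrow> enat) \<Rightarrow> 'a set \<Rightarrow> 'a \<Rightarrow> ('a \<Rightarrow> real) set" where
  "perp_roots m I x = {\<gamma> \<in> roots_on m I. bform m \<gamma> (alpha x) = 0}"

definition pos_comb_of_two :: "('a \<Rightarrow> real) set \<Rightarrow> ('a \<Rightarrow> real) \<Rightarrow> bool" where
  "pos_comb_of_two P \<gamma> \<longleftrightarrow>
     (\<exists>F c. finite F \<and> F \<subseteq> P \<and> card F \<ge> 2 \<and> (\<forall>\<beta>\<in>F. c \<beta> > (0::real)) \<and>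
            \<gamma> = (\<lambda>t. \<Sum>\<beta>\<in>F. c \<beta> * \<beta> t))"

definition Pi_perp :: "('a \<Rightarrow> 'a \<Rightarrow> enat) \<Rightarrow> 'a set \<Rightarrow> 'a \<Rightarrow> ('a \<Rightarrow> real) set" where
  "Pi_perp m I x =
     {\<gamma> \<in> perp_roots m I x \<inter> pos_roots m.
        \<not> pos_comb_of_two (perp_roots m I x \<inter> pos_roots m) \<gamma>}"

definition R_perp :: "('a \<Rightarrow> 'a \<Rightarrow> enat) \<Rightarrow> 'a set \<Rightarrow> 'a \<Rightarrow> (('a \<Rightarrow> real) \<Rightarrow> ('a \<Rightarrow> real)) set" where
  "R_perp m I x = refl m ` Pi_perp m I x"

definition odd_edge :: "('a \<Rightarrow> 'a \<Rightarrow> enat) \<Rightarrow> 'a \<Rightarrow> 'a \<Rightarrow> bool" where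
  "odd_edge m s t \<longleftrightarrow> s \<noteq> t \<and> (\<exists>k. m s t = enat k \<and> odd k \<and> k \<ge> 3)"

definition odd_component :: "('a \<Rightarrow> 'a \<Rightarrow> enat) \<Rightarrow> 'a \<Rightarrow> 'a set" where
  "odd_component m x = {s. (odd_edge m)\<^sup>*\<^sup>* x s}"

end

theory Submission
  imports Defs
begin



lemma bil_sym: "coxeter_matrix m \<Longrightarrow> bil_coeff m s t = bil_coeff m t s"
  by (simp add: bil_coeff_def coxeter_matrix_def)

lemma supp_alpha[simp]: "supp (alpha s) = {s}"
  by (auto simp: supp_def alpha_def)

lemma alpha_same[simp]: "alpha s s = 1" by (simp add: alpha_def)
lemma alpha_other[simp]: "t \<noteq> s \<Longrightarrow> alpha s t = 0" by (simp add: alpha_def)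

locale cox = fixes m :: "'a \<Rightarrow> 'a \<Rightarrow> enat" assumes cm: "coxeter_matrix m"
begin

abbreviation fs :: "('a \<Rightarrow> real) \<Rightarrow> bool" where "fs v \<equiv> finite (supp v)"
abbreviation sig :: "'a \<Rightarrow> ('a \<Rightarrow> real) \<Rightarrow> real" where "sig c v \<equiv> bform m (alpha c) v"
abbreviation r :: "'a \<Rightarrow> ('a \<Rightarrow> real) \<Rightarrow> ('a \<Rightarrow> real)" where "r c \<equiv> refl m (alpha c)"
abbreviation bl where "bl \<equiv> bil_coeff m"

lemma bsym: "bl s t = bl t s" using bil_sym[OF cm] .

lemma bdiag[simp]: "bl s s = 1"
  using cm by (simp add: bil_coeff_def coxeter_matrix_def one_enat_def)

lemma sig_sum: assumes "finite A" "supp v \<subseteq> A"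
  shows "sig c v = (\<Sum>t\<in>A. v t * bl c t)"
proof -
  have "sig c v = (\<Sum>t\<in>supp v. v t * bl c t)"
    by (simp add: bform_def)
  also have "\<dots> = (\<Sum>t\<in>A. v t * bl c t)"
    by (rule sum.mono_neutral_left) (use assms in \<open>auto simp: supp_def\<close>)
  finally show ?thesis .
qed

lemma sig_inf: "\<not> fs v \<Longrightarrow> sig c v = 0"
  by (simp add: bform_def)

lemma B_sum: assumes "finite A" "supp u \<subseteq> A" "fs v"
  shows "bform m u v = (\<Sum>s\<in>A. u s * sig s v)"
proof -
  have "bform m u v = (\<Sum>s\<in>supp u. u s * sig s v)"
    by (simp add: bform_def sig_sum[OF assms(3)] sum_distrib_left mult.assoc)
  also have "\<dots> = (\<Sum>s\<in>A. u s * sig s v)"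
    by (rule sum.mono_neutral_left) (use assms in \<open>auto simp: supp_def\<close>)
  finally show ?thesis .
qed

lemma B_sym: "bform m u v = bform m v u"
  unfolding bform_def by (subst sum.swap) (simp add: bsym mult.commute mult.left_commute)

lemma fs_alpha[simp]: "fs (alpha s)" by simp

lemma supp_lin: "supp (\<lambda>t. x * u t + y * v t) \<subseteq> supp u \<union> supp v"
  by (auto simp: supp_def)

lemma fs_lin[simp]: "fs u \<Longrightarrow> fs v \<Longrightarrow> fs (\<lambda>t. x * u t + y * v t)"
  by (rule finite_subset[OF supp_lin]) simp

lemma supp_refl: "supp (refl m g v) \<subseteq> supp v \<union> supp g"
  by (auto simp: supp_def refl_def)

lemma fs_refl[simp]: "fs g \<Longrightarrow> fs v \<Longrightarrow> fs (refl m g v)"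
  by (rule finite_subset[OF supp_refl]) simp

lemma sig_lin: assumes "fs u" "fs v"
  shows "sig c (\<lambda>t. x * u t + y * v t) = x * sig c u + y * sig c v"
proof -
  let ?A = "supp u \<union> supp v"
  have "finite ?A" using assms by simp
  then show ?thesis
    using supp_lin[of x u y v]
    by (simp add: sig_sum[of ?A] sum.distrib sum_distrib_left algebra_simps)
qed

lemma sig_alpha[simp]: "sig c (alpha d) = bl c d"
  by (simp add: sig_sum[of "{d}"])

lemma r_inf: "\<not> fs v \<Longrightarrow> r c v = v"
  by (simp add: refl_def sig_inf)

lemma r_apply: "r c v = (\<lambda>t. v t - 2 * sig c v * alpha c t)"
  by (simp add: refl_def)

lemma sig_r: assumes "fs v" shows "sig d (r c v) = sig d v - 2 * sig c v * bl d c"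
proof -
  have "sig d (r c v) = sig d (\<lambda>t. 1 * v t + (- 2 * sig c v) * alpha c t)" by (simp add: refl_def)
  also have "\<dots> = 1 * sig d v + (- 2 * sig c v) * sig d (alpha c)"
    by (rule sig_lin[OF assms fs_alpha])
  finally show ?thesis by simp
qed

lemma r_r[simp]: "r c (r c v) = v"
proof (cases "fs v")
  case True
  have "sig c (r c v) = - sig c v" using sig_r[OF True, of c c] by simp
  then show ?thesis by (simp add: refl_def)
next
  case False then show ?thesis by (simp add: r_inf)
qed

lemma r_comp[simp]: "r c \<circ> r c = id" by (rule ext) simp

lemma B_lin_left: assumes "fs u" "fs v" "fs w"
  shows "bform m (\<lambda>t. x * u t + y * v t) w = x * bform m u w + y * bform m v w"
proof -
  let ?A = "supp u \<union> supp v"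
  have fA: "finite ?A" using assms by simp
  have "bform m (\<lambda>t. x * u t + y * v t) w = (\<Sum>s\<in>?A. (x * u s + y * v s) * sig s w)"
    by (rule B_sum[OF fA supp_lin assms(3)])
  also have "\<dots> = x * (\<Sum>s\<in>?A. u s * sig s w) + y * (\<Sum>s\<in>?A. v s * sig s w)"
    by (simp add: sum.distrib sum_distrib_left distrib_right mult.assoc)
  also have "(\<Sum>s\<in>?A. u s * sig s w) = bform m u w"
    by (rule B_sum[symmetric]) (use fA assms in auto)
  also have "(\<Sum>s\<in>?A. v s * sig s w) = bform m v w"
    by (rule B_sum[symmetric]) (use fA assms in auto)
  finally show ?thesis .
qed

lemma B_alpha_right: "bform m w (alpha c) = sig c w" by (rule B_sym)

lemma B_r_left: assumes "fs u" "fs w"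
  shows "bform m (r c u) w = bform m u w - 2 * sig c u * sig c w"
proof -
  have "bform m (r c u) w = bform m (\<lambda>t. 1 * u t + (- 2 * sig c u) * alpha c t) w"
    by (simp add: refl_def)
  also have "\<dots> = 1 * bform m u w + (- 2 * sig c u) * bform m (alpha c) w"
    by (rule B_lin_left[OF assms(1) fs_alpha assms(2)])
  finally show ?thesis by simp
qed

lemma B_r: assumes "fs u" "fs v"
  shows "bform m (r c u) (r c v) = bform m u v"
proof -
  have 1: "bform m (r c u) (r c v) = bform m u (r c v) - 2 * sig c u * sig c (r c v)"
    using assms by (simp add: B_r_left)
  have 2: "bform m u (r c v) = bform m v u - 2 * sig c v * sig c u"
    using B_sym[of u "r c v"] B_r_left[OF assms(2,1)] by simp
  have 3: "sig c (r c v) = - sig c v" using sig_r[OF assms(2), of c c] by simp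
  show ?thesis using 1 2 3 B_sym[of v u] by simp
qed

lemma r_lin: assumes "fs u" "fs v"
  shows "r c (\<lambda>t. x * u t + y * v t) = (\<lambda>t. x * r c u t + y * r c v t)"
  using assms by (simp add: refl_def sig_lin algebra_simps)

lemma supp_setsum: "supp (\<lambda>t. \<Sum>\<beta>\<in>F. k \<beta> * g \<beta> t) \<subseteq> (\<Union>\<beta>\<in>F. supp (g \<beta>))"
proof (auto simp: supp_def)
  fix t assume "(\<Sum>\<beta>\<in>F. k \<beta> * g \<beta> t) \<noteq> 0"
  then obtain \<beta> where "\<beta> \<in> F" "k \<beta> * g \<beta> t \<noteq> 0" by (rule sum.not_neutral_contains_not_neutral)
  then show "\<exists>\<beta>\<in>F. g \<beta> t \<noteq> 0" by auto
qed

lemma fs_setsum: "finite F \<Longrightarrow> (\<And>\<beta>. \<beta> \<in> F \<Longrightarrow> fs (g \<beta>)) \<Longrightarrow> fs (\<lambda>t. \<Sum>\<beta>\<in>F. k \<beta> * g \<beta> t)"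
  by (rule finite_subset[OF supp_setsum]) auto

lemma sig_setsum: assumes "finite F" "\<And>\<beta>. \<beta> \<in> F \<Longrightarrow> fs (g \<beta>)"
  shows "sig c (\<lambda>t. \<Sum>\<beta>\<in>F. k \<beta> * g \<beta> t) = (\<Sum>\<beta>\<in>F. k \<beta> * sig c (g \<beta>))"
proof -
  let ?A = "\<Union>\<beta>\<in>F. supp (g \<beta>)"
  have fA: "finite ?A" using assms by auto
  have "sig c (\<lambda>t. \<Sum>\<beta>\<in>F. k \<beta> * g \<beta> t) = (\<Sum>t\<in>?A. (\<Sum>\<beta>\<in>F. k \<beta> * g \<beta> t) * bl c t)"
    by (rule sig_sum[OF fA supp_setsum])
  also have "\<dots> = (\<Sum>t\<in>?A. \<Sum>\<beta>\<in>F. k \<beta> * (g \<beta> t * bl c t))"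
    by (simp add: sum_distrib_right mult.assoc)
  also have "\<dots> = (\<Sum>\<beta>\<in>F. \<Sum>t\<in>?A. k \<beta> * (g \<beta> t * bl c t))"
    by (rule sum.swap)
  also have "\<dots> = (\<Sum>\<beta>\<in>F. k \<beta> * (\<Sum>t\<in>?A. g \<beta> t * bl c t))"
    by (simp add: sum_distrib_left)
  also have "\<dots> = (\<Sum>\<beta>\<in>F. k \<beta> * sig c (g \<beta>))"
  proof (rule sum.cong[OF refl])
    fix \<beta> assume "\<beta> \<in> F" then have "supp (g \<beta>) \<subseteq> ?A" by auto
    then show "k \<beta> * (\<Sum>t\<in>?A. g \<beta> t * bl c t) = k \<beta> * sig c (g \<beta>)"
      using sig_sum[OF fA, of "g \<beta>" c] by simp
  qed
  finally show ?thesis .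
qed

lemma r_setsum: assumes "finite F" "\<And>\<beta>. \<beta> \<in> F \<Longrightarrow> fs (g \<beta>)"
  shows "r c (\<lambda>t. \<Sum>\<beta>\<in>F. k \<beta> * g \<beta> t) = (\<lambda>t. \<Sum>\<beta>\<in>F. k \<beta> * r c (g \<beta>) t)"
proof (rule ext)
  fix t
  have "r c (\<lambda>t. \<Sum>\<beta>\<in>F. k \<beta> * g \<beta> t) t = (\<Sum>\<beta>\<in>F. k \<beta> * g \<beta> t) - 2 * (\<Sum>\<beta>\<in>F. k \<beta> * sig c (g \<beta>)) * alpha c t"
    by (simp add: refl_def sig_setsum[OF assms])
  also have "\<dots> = (\<Sum>\<beta>\<in>F. k \<beta> * g \<beta> t - k \<beta> * (2 * sig c (g \<beta>) * alpha c t))"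
    by (simp add: sum_subtractf sum_distrib_right sum_distrib_left mult_ac)
  also have "\<dots> = (\<Sum>\<beta>\<in>F. k \<beta> * r c (g \<beta>) t)"
    by (simp add: refl_def right_diff_distrib)
  finally show "r c (\<lambda>t. \<Sum>\<beta>\<in>F. k \<beta> * g \<beta> t) t = (\<Sum>\<beta>\<in>F. k \<beta> * r c (g \<beta>) t)" .
qed

fun ev :: "'a list \<Rightarrow> ('a \<Rightarrow> real) \<Rightarrow> ('a \<Rightarrow> real)" where
  "ev [] = id"
| "ev (c # ws) = r c \<circ> ev ws"

lemma ev_append[simp]: "ev (xs @ ys) = ev xs \<circ> ev ys"
  by (induction xs) auto

lemma fs_ev[simp]: "fs v \<Longrightarrow> fs (ev ws v)"
  by (induction ws) auto

lemma ev_inf: "\<not> fs v \<Longrightarrow> ev ws v = v"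
  by (induction ws) (auto simp: r_inf)

lemma ev_rev1[simp]: "ev (rev ws) (ev ws v) = v"
  by (induction ws arbitrary: v) auto

lemma ev_rev2[simp]: "ev ws (ev (rev ws) v) = v"
  using ev_rev1[of "rev ws"] by simp

lemma ev_inj: "ev ws u = ev ws v \<Longrightarrow> u = v"
  by (metis ev_rev1)

lemma B_ev: "fs u \<Longrightarrow> fs v \<Longrightarrow> bform m (ev ws u) (ev ws v) = bform m u v"
  by (induction ws) (auto simp: B_r)

lemma ev_lin: assumes "fs u" "fs v"
  shows "ev ws (\<lambda>t. x * u t + y * v t) = (\<lambda>t. x * ev ws u t + y * ev ws v t)"
  using assms by (induction ws) (auto simp: r_lin)

lemma ev_setsum: assumes "finite F" "\<And>\<beta>. \<beta> \<in> F \<Longrightarrow> fs (g \<beta>)"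
  shows "ev ws (\<lambda>t. \<Sum>\<beta>\<in>F. k \<beta> * g \<beta> t) = (\<lambda>t. \<Sum>\<beta>\<in>F. k \<beta> * ev ws (g \<beta>) t)"
  using assms by (induction ws) (auto simp: r_setsum)

lemma r_coord: "t \<noteq> c \<Longrightarrow> r c v t = v t"
  by (simp add: refl_def)

lemma ev_coord: "t \<notin> set ws \<Longrightarrow> ev ws v t = v t"
  by (induction ws) (auto simp: r_coord)

lemma roots_ev: "\<gamma> \<in> roots m \<longleftrightarrow> (\<exists>ws s. \<gamma> = ev ws (alpha s))"
proof
  assume "\<gamma> \<in> roots m" then show "\<exists>ws s. \<gamma> = ev ws (alpha s)"
  proof induction
    case (simple s) then show ?case by (metis ev.simps(1) id_apply)
  next
    case (step g s)
    then obtain ws t where "g = ev ws (alpha t)" by blast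
    then have "refl m (alpha s) g = ev (s # ws) (alpha t)" by simp
    then show ?case by blast
  qed
next
  assume "\<exists>ws s. \<gamma> = ev ws (alpha s)"
  then obtain ws s where g: "\<gamma> = ev ws (alpha s)" by blast
  have "ev ws (alpha s) \<in> roots m"
    by (induction ws) (auto intro: roots.intros)
  then show "\<gamma> \<in> roots m" using g by simp
qed

lemma root_fs: "\<gamma> \<in> roots m \<Longrightarrow> fs \<gamma>"
  by (auto simp: roots_ev)

lemma root_norm: "\<gamma> \<in> roots m \<Longrightarrow> bform m \<gamma> \<gamma> = 1"
  by (auto simp: roots_ev B_ev)

lemma root_r: "\<gamma> \<in> roots m \<Longrightarrow> r c \<gamma> \<in> roots m"
  by (rule roots.step)

lemma root_ev: "\<gamma> \<in> roots m \<Longrightarrow> ev ws \<gamma> \<in> roots m"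
  by (induction ws) (auto intro: roots.step)

end



fun Sq :: "real \<Rightarrow> nat \<Rightarrow> real" where
  "Sq c 0 = 0"
| "Sq c (Suc 0) = 1"
| "Sq c (Suc (Suc n)) = 2 * c * Sq c (Suc n) - Sq c n"

lemma Sq_one: "Sq 1 n = real n"
  by (induction "1::real" n rule: Sq.induct) auto

lemma Sq_sin: "Sq (cos th) n * sin th = sin (real n * th)"
proof (induction "cos th" n rule: Sq.induct)
  case 1 then show ?case by simp
next
  case 2 then show ?case by simp
next
  case (3 n)
  have e1: "real (Suc (Suc n)) * th = real (Suc n) * th + th" by (simp add: algebra_simps)
  have e2: "real n * th = real (Suc n) * th - th" by (simp add: algebra_simps)
  have "Sq (cos th) (Suc (Suc n)) * sin th = 2 * cos th * sin (real (Suc n) * th) - sin (real n * th)"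
    using 3 by (simp add: algebra_simps)
  also have "\<dots> = sin (real (Suc (Suc n)) * th)"
    unfolding e1 e2 sin_add sin_diff by (simp add: algebra_simps)
  finally show ?case .
qed

lemma Sq_nonneg_fin:
  assumes "K \<ge> 2" "n \<le> K"
  shows "Sq (cos (pi / real K)) n \<ge> 0"
proof -
  let ?th = "pi / real K"
  have th0: "0 < ?th" using assms by simp
  have th1: "?th < pi" using assms by (simp add: field_simps)
  have s: "sin ?th > 0" using th0 th1 by (rule sin_gt_zero)
  have "real n * ?th \<le> pi" using assms by (simp add: field_simps)
  then have "sin (real n * ?th) \<ge> 0" by (intro sin_ge_zero) (use th0 in auto)
  then show ?thesis using Sq_sin[of ?th n] s
    by (metis zero_le_mult_iff not_less less_le_not_le)
qed

lemma Sq_vals: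
  assumes "K \<ge> 2"
  shows "Sq (cos (pi / real K)) K = 0" "Sq (cos (pi / real K)) (Suc K) = -1"
    "Sq (cos (pi / real K)) (K - 1) = 1"
proof -
  let ?th = "pi / real K"
  have th0: "0 < ?th" using assms by simp
  have th1: "?th < pi" using assms by (simp add: field_simps)
  have s: "sin ?th > 0" using th0 th1 by (rule sin_gt_zero)
  have a: "real K * ?th = pi" using assms by simp
  have b: "real (Suc K) * ?th = pi + ?th" using assms by (simp add: field_simps)
  have c: "real (K - 1) * ?th = pi - ?th" using assms by (simp add: field_simps of_nat_diff)
  show "Sq (cos ?th) K = 0" using Sq_sin[of ?th K] s a by simp
  have "(Sq (cos ?th) (Suc K) + 1) * sin ?th = 0" using Sq_sin[of ?th "Suc K"] s b
    by (simp add: sin_add algebra_simps)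
  then show "Sq (cos ?th) (Suc K) = -1" using s by simp
  show "Sq (cos ?th) (K - 1) = 1" using Sq_sin[of ?th "K - 1"] s c by (simp add: sin_diff)
qed

fun alt :: "'a \<Rightarrow> 'a \<Rightarrow> nat \<Rightarrow> 'a list" where
  "alt a b 0 = []"
| "alt a b (Suc n) = (if even n then b else a) # alt a b n"

lemma alt_set: "set (alt a b n) \<subseteq> {a, b}"
  by (induction n) auto

lemma alt_length[simp]: "length (alt a b n) = n"
  by (induction n) auto

lemma alt_snoc: "alt a b (Suc n) = alt b a n @ [b]"
  by (induction n) auto

context cox begin

definition cc :: "'a \<Rightarrow> 'a \<Rightarrow> real" where "cc a b = - bl a b"

lemma cc_sym: "cc a b = cc b a" by (simp add: cc_def bsym)

lemma r_two: assumes "p \<noteq> q"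
  shows "r c (\<lambda>t. x * alpha p t + y * alpha q t) =
    (\<lambda>t. x * alpha p t + y * alpha q t - 2 * (x * bl c p + y * bl c q) * alpha c t)"
proof -
  have "sig c (\<lambda>t. x * alpha p t + y * alpha q t) = x * bl c p + y * bl c q"
    by (simp add: sig_lin)
  then show ?thesis by (simp add: refl_def)
qed

lemma alt_formula: assumes "a \<noteq> b"
  shows "ev (alt a b n) (alpha a) =
    (\<lambda>t. Sq (cc a b) (Suc n) * alpha (if even n then a else b) t + Sq (cc a b) n * alpha (if even n then b else a) t)"
proof (induction n)
  case 0 then show ?case by (auto simp: alpha_def)
next
  case (Suc n)
  let ?p = "if even n then a else b" and ?q = "if even n then b else a"
  have pq: "?p \<noteq> ?q" using assms by auto
  have bqp: "bl ?q ?p = - cc a b" using assms by (auto simp: cc_def bsym)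
  have "ev (alt a b (Suc n)) (alpha a) = r ?q (ev (alt a b n) (alpha a))" by simp
  also have "\<dots> = (\<lambda>t. Sq (cc a b) (Suc n) * alpha ?p t + Sq (cc a b) n * alpha ?q t
      - 2 * (Sq (cc a b) (Suc n) * bl ?q ?p + Sq (cc a b) n * bl ?q ?q) * alpha ?q t)"
    unfolding Suc.IH by (rule r_two[OF pq])
  also have "\<dots> = (\<lambda>t. Sq (cc a b) (Suc (Suc n)) * alpha ?q t + Sq (cc a b) (Suc n) * alpha ?p t)"
    unfolding bqp by (rule ext) (simp add: algebra_simps)
  finally show ?case by (simp add: if_distrib)
qed

end



context cox begin

lemma m_sym: "m a b = m b a" using cm by (simp add: coxeter_matrix_def)

lemma m_ge2: "a \<noteq> b \<Longrightarrow> m a b \<ge> 2" using cm by (simp add: coxeter_matrix_def)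

lemma fin_K: assumes "a \<noteq> b" "m a b = enat K" shows "K \<ge> 2"
  using m_ge2[OF assms(1)] assms(2) by (simp add: numeral_eq_enat)

lemma cc_fin: "m a b = enat K \<Longrightarrow> cc a b = cos (pi / real K)"
  by (simp add: cc_def bil_coeff_def)

lemma cc_inf: "m a b = \<infinity> \<Longrightarrow> cc a b = 1"
  by (simp add: cc_def bil_coeff_def)

lemma bl_cc: "bl a b = - cc a b" by (simp add: cc_def)

lemma dep: assumes "set ws \<subseteq> {a, b}" "fs u" "fs v" "sig a u = sig a v" "sig b u = sig b v"
  shows "\<exists>D. fs D \<and> ev ws u = (\<lambda>t. u t + D t) \<and> ev ws v = (\<lambda>t. v t + D t)"
  using assms(1)
proof (induction ws)
  case Nil then show ?case by (intro exI[of _ "\<lambda>t. 0"]) (auto simp: supp_def)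
next
  case (Cons c ws)
  then obtain D where D: "fs D" "ev ws u = (\<lambda>t. u t + D t)" "ev ws v = (\<lambda>t. v t + D t)" by auto
  have c: "c = a \<or> c = b" using Cons by auto
  have su: "sig c (\<lambda>t. 1 * u t + 1 * D t) = sig c u + sig c D" using sig_lin[OF assms(2) D(1), of c 1 1] by simp
  have sv: "sig c (\<lambda>t. 1 * v t + 1 * D t) = sig c v + sig c D" using sig_lin[OF assms(3) D(1), of c 1 1] by simp
  have eq: "sig c u = sig c v" using c assms by auto
  let ?D = "\<lambda>t. D t - 2 * (sig c u + sig c D) * alpha c t"
  have "supp ?D \<subseteq> supp D \<union> {c}" by (auto simp: supp_def alpha_def)
  moreover have "finite (supp D \<union> {c})" using D(1) by simp
  ultimately have "fs ?D" by (rule finite_subset)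
  moreover have "ev (c # ws) u = (\<lambda>t. u t + ?D t)"
    using su by (simp add: D refl_def algebra_simps)
  moreover have "ev (c # ws) v = (\<lambda>t. v t + ?D t)"
    using sv eq by (simp add: D refl_def algebra_simps)
  ultimately show ?case by blast
qed

lemma neg_alpha: "(\<lambda>t. - alpha a t) = (\<lambda>t. (-1) * alpha a t + 0 * alpha a t)" by simp

lemma ev_neg: "fs v \<Longrightarrow> ev ws (\<lambda>t. - v t) = (\<lambda>t. - ev ws v t)"
  using ev_lin[of v v ws "-1" 0] by simp

lemma r_self: "r a (alpha a) = (\<lambda>t. - alpha a t)"
  by (rule ext) (simp add: refl_def)

lemma braid_alpha: assumes "a \<noteq> b" "m a b = enat K"
  shows "ev (alt a b K) (alpha a) = ev (alt b a K) (alpha a)"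
proof -
  have K: "K \<ge> 2" by (rule fin_K[OF assms])
  have C: "cc a b = cos (pi / real K)" by (rule cc_fin[OF assms(2)])
  obtain n where n: "K = Suc n" using K by (cases K) auto
  have "ev (alt a b K) (alpha a) = (\<lambda>t. - alpha (if even K then a else b) t)"
    using alt_formula[OF assms(1), of K] Sq_vals[OF K] C by simp
  moreover have "ev (alt b a K) (alpha a) = ev (alt a b n) (r a (alpha a))"
    unfolding n alt_snoc by simp
  moreover have "\<dots> = (\<lambda>t. - ev (alt a b n) (alpha a) t)"
    by (simp add: r_self ev_neg)
  moreover have "ev (alt a b n) (alpha a) = (\<lambda>t. alpha (if even n then b else a) t)"
    using alt_formula[OF assms(1), of n] Sq_vals[OF K] C n by simp
  ultimately show ?thesis using n by auto
qed

lemma braid: assumes "a \<noteq> b" "m a b = enat K"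
  shows "ev (alt a b K) = ev (alt b a K)"
proof (rule ext)
  fix v
  show "ev (alt a b K) v = ev (alt b a K) v"
  proof (cases "fs v")
    case False then show ?thesis by (simp add: ev_inf)
  next
    case True
    have K: "K \<ge> 2" by (rule fin_K[OF assms])
    let ?C = "cc a b"
    have C: "?C = cos (pi / real K)" by (rule cc_fin[OF assms(2)])
    have C1: "?C < 1"
    proof -
      have "0 < pi / real K" "pi / real K \<le> pi" using K by (auto simp: field_simps)
      then have "cos (pi / real K) < cos 0" by (subst cos_mono_less_eq) auto
      then show ?thesis using C by simp
    qed
    have Cm: "?C > -1"
    proof -
      have "0 < pi / real K" "pi / real K \<le> pi / 2" using K by (auto simp: field_simps)
      then have "cos (pi / real K) \<ge> 0" by (intro cos_ge_zero) auto
      then show ?thesis using C by simp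
    qed
    have "(1 - ?C) * (1 + ?C) > 0" using C1 Cm by simp
    then have den: "1 - ?C * ?C \<noteq> 0" by (simp add: algebra_simps)
    define sa where "sa = sig a v"
    define sb where "sb = sig b v"
    define x where "x = (sa + ?C * sb) / (1 - ?C * ?C)"
    define y where "y = (sb + ?C * sa) / (1 - ?C * ?C)"
    let ?p = "\<lambda>t. x * alpha a t + y * alpha b t"
    have bab: "bl a b = - ?C" "bl b a = - ?C" using bl_cc cc_sym by auto
    have "sig a ?p = x - ?C * y" by (simp add: sig_lin bab)
    also have "\<dots> = (sa + ?C * sb - ?C * (sb + ?C * sa)) / (1 - ?C * ?C)"
      by (simp add: x_def y_def diff_divide_distrib)
    also have "\<dots> = sa * (1 - ?C * ?C) / (1 - ?C * ?C)" by (simp add: algebra_simps)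
    also have "\<dots> = sa" using den by simp
    finally have spa: "sig a ?p = sa" .
    have "sig b ?p = y - ?C * x" by (simp add: sig_lin bab)
    also have "\<dots> = (sb + ?C * sa - ?C * (sa + ?C * sb)) / (1 - ?C * ?C)"
      by (simp add: x_def y_def diff_divide_distrib)
    also have "\<dots> = sb * (1 - ?C * ?C) / (1 - ?C * ?C)" by (simp add: algebra_simps)
    also have "\<dots> = sb" using den by simp
    finally have spb: "sig b ?p = sb" .
    have fp: "fs ?p" by simp
    have "\<exists>D. fs D \<and> ev (alt a b K) v = (\<lambda>t. v t + D t) \<and> ev (alt a b K) ?p = (\<lambda>t. ?p t + D t)"
      by (rule dep[OF alt_set True fp]) (simp_all add: spa spb sa_def sb_def)
    then obtain D1 where D1: "ev (alt a b K) v = (\<lambda>t. v t + D1 t)" "ev (alt a b K) ?p = (\<lambda>t. ?p t + D1 t)"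
      by blast
    have "set (alt b a K) \<subseteq> {a, b}" using alt_set[of b a K] by auto
    then have "\<exists>D. fs D \<and> ev (alt b a K) v = (\<lambda>t. v t + D t) \<and> ev (alt b a K) ?p = (\<lambda>t. ?p t + D t)"
      by (rule dep[OF _ True fp]) (simp_all add: spa spb sa_def sb_def)
    then obtain D2 where D2: "ev (alt b a K) v = (\<lambda>t. v t + D2 t)" "ev (alt b a K) ?p = (\<lambda>t. ?p t + D2 t)"
      by blast
    have e1: "ev (alt a b K) (alpha a) = ev (alt b a K) (alpha a)" by (rule braid_alpha[OF assms])
    have e2: "ev (alt a b K) (alpha b) = ev (alt b a K) (alpha b)"
      using braid_alpha[of b a K] assms m_sym by auto
    have l1: "ev (alt a b K) ?p = (\<lambda>t. x * ev (alt a b K) (alpha a) t + y * ev (alt a b K) (alpha b) t)"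
      by (rule ev_lin) simp_all
    have l2: "ev (alt b a K) ?p = (\<lambda>t. x * ev (alt b a K) (alpha a) t + y * ev (alt b a K) (alpha b) t)"
      by (rule ev_lin) simp_all
    have eq: "ev (alt a b K) ?p = ev (alt b a K) ?p" unfolding l1 l2 e1 e2 ..
    have "D1 = D2"
    proof (rule ext)
      fix t show "D1 t = D2 t" using fun_cong[OF eq, of t] D1(2) D2(2) by simp
    qed
    then show ?thesis using D1 D2 by simp
  qed
qed

end



fun altp :: "'a list \<Rightarrow> bool" where
  "altp (x # y # zs) = (x \<noteq> y \<and> altp (y # zs))"
| "altp _ = True"

lemma not_altp: "\<not> altp us \<Longrightarrow> \<exists>xs c ys. us = xs @ c # c # ys"
proof (induction us rule: altp.induct)
  case (1 x y zs)
  show ?case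
  proof (cases "x = y")
    case True then show ?thesis by (metis append_Nil)
  next
    case False
    then obtain xs c ys where "y # zs = xs @ c # c # ys" using 1 by auto
    then have "x # y # zs = (x # xs) @ c # c # ys" by simp
    then show ?thesis by blast
  qed
qed auto

lemma altp_tl: "altp (x # xs) \<Longrightarrow> altp xs"
  by (cases xs) auto

lemma altlist: assumes "altp us" "set us \<subseteq> {a, b}" "us \<noteq> []" "last us = b" "a \<noteq> b"
  shows "us = alt a b (length us)"
  using assms
proof (induction us)
  case Nil then show ?case by simp
next
  case (Cons c us)
  show ?case
  proof (cases "us = []")
    case True then show ?thesis using Cons by simp
  next
    case False
    have lu: "last us = b" using Cons.prems(4) False by simp
    have IH: "us = alt a b (length us)"
      by (rule Cons.IH[OF altp_tl[OF Cons.prems(1)] _ False lu Cons.prems(5)]) (use Cons.prems(2) in auto)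
    obtain n where n: "length us = Suc n" using False by (cases us) auto
    have us2: "us = alt a b (Suc n)" using IH unfolding n .
    have hd: "hd us = (if even n then b else a)" by (subst us2) simp
    have "c \<noteq> hd us" using Cons.prems(1) False by (cases us) auto
    then have "c = (if even (Suc n) then b else a)" using hd Cons.prems(2) by auto
    then show ?thesis using us2 n by simp
  qed
qed

lemma alt_split: "\<exists>pre. alt a b (j + K) = pre @ alt a b K \<and> set pre \<subseteq> {a, b} \<and> length pre = j"
proof (induction j)
  case 0 then show ?case by simp
next
  case (Suc j)
  then obtain pre where "alt a b (j + K) = pre @ alt a b K" "set pre \<subseteq> {a, b}" "length pre = j" by blast
  then show ?case by (intro exI[of _ "(if even (j + K) then b else a) # pre"]) auto
qed

context cox begin

definition lenS :: "'a set \<Rightarrow> (('a \<Rightarrow> real) \<Rightarrow> ('a \<Rightarrow> real)) \<Rightarrow> nat" where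
  "lenS A f = (LEAST n. \<exists>ws. set ws \<subseteq> A \<and> length ws = n \<and> ev ws = f)"

lemma lenS_le: "set ws \<subseteq> A \<Longrightarrow> ev ws = f \<Longrightarrow> lenS A f \<le> length ws"
  unfolding lenS_def by (rule Least_le) blast

lemma lenS_ex: "set ws \<subseteq> A \<Longrightarrow> ev ws = f \<Longrightarrow> \<exists>ws'. set ws' \<subseteq> A \<and> length ws' = lenS A f \<and> ev ws' = f"
  unfolding lenS_def by (rule LeastI_ex) blast

abbreviation nonneg :: "('a \<Rightarrow> real) \<Rightarrow> bool" where "nonneg v \<equiv> \<forall>t. v t \<ge> 0"

lemma r_r_comp[simp]: "r c \<circ> (r c \<circ> f) = f" by (rule ext) simp

lemma ev_snoc_r: "ev (xs @ [c]) \<circ> r c = ev xs"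
  by (simp add: comp_assoc)

lemma dih: assumes st: "s \<noteq> t" and us: "set us \<subseteq> {s, t}" and red: "length us = lenS {s, t} (ev us)"
  and ge: "lenS {s, t} (ev us \<circ> r s) \<ge> length us"
  shows "\<exists>x y. x \<ge> 0 \<and> y \<ge> 0 \<and> ev us (alpha s) = (\<lambda>u. x * alpha s u + y * alpha t u)"
proof (cases "us = []")
  case True then show ?thesis by (intro exI[of _ 1] exI[of _ 0]) auto
next
  case ne: False
  have ap: "altp us"
  proof (rule ccontr)
    assume "\<not> altp us"
    then obtain xs c ys where u: "us = xs @ c # c # ys" using not_altp by blast
    have "ev us = ev (xs @ ys)" unfolding u by (simp add: comp_assoc)
    moreover have "set (xs @ ys) \<subseteq> {s, t}" using us u by auto
    ultimately have "lenS {s, t} (ev us) \<le> length (xs @ ys)" by (intro lenS_le) auto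
    then show False using red u by simp
  qed
  have lt: "last us = t"
  proof (rule ccontr)
    assume "last us \<noteq> t"
    moreover have "last us \<in> {s, t}" using us ne last_in_set by blast
    ultimately have ls: "last us = s" by auto
    have u: "us = butlast us @ [s]" using append_butlast_last_id[OF ne] ls by simp
    have "ev us \<circ> r s = ev (butlast us)" by (subst u) (rule ev_snoc_r)
    moreover have "set (butlast us) \<subseteq> {s, t}" using us in_set_butlastD by fastforce
    ultimately have "lenS {s, t} (ev us \<circ> r s) \<le> length (butlast us)" by (intro lenS_le) auto
    moreover have "length us \<ge> 1" using ne by (cases us) auto
    ultimately show False using ge by simp
  qed
  define n where "n = length us"
  have ua: "us = alt s t n" unfolding n_def by (rule altlist[OF ap us ne lt st])
  have nn: "Sq (cc s t) (Suc n) \<ge> 0 \<and> Sq (cc s t) n \<ge> 0"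
  proof (cases "m s t")
    case infinity then show ?thesis by (simp add: cc_inf Sq_one)
  next
    case (enat K)
    have K: "K \<ge> 2" by (rule fin_K[OF st enat])
    show ?thesis
    proof (cases "Suc n \<le> K")
      case True then show ?thesis using Sq_nonneg_fin[OF K] cc_fin[OF enat] by simp
    next
      case False
      define j where "j = n - K"
      have j: "n = j + K" using False j_def by simp
      obtain pre where pre: "alt s t n = pre @ alt s t K" "set pre \<subseteq> {s, t}" "length pre = j"
        using alt_split[of s t j K] j by blast
      obtain k where k: "K = Suc k" using K by (cases K) auto
      have "ev us \<circ> r s = ev pre \<circ> ev (alt s t K) \<circ> r s" using ua pre by simp
      also have "\<dots> = ev pre \<circ> ev (alt t s K) \<circ> r s" using braid[OF st enat] by simp
      also have "\<dots> = ev pre \<circ> ev (alt s t k)" unfolding k alt_snoc by (simp add: comp_assoc)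
      also have "\<dots> = ev (pre @ alt s t k)" by simp
      finally have "lenS {s, t} (ev us \<circ> r s) \<le> length (pre @ alt s t k)"
        using pre(2) alt_set[of s t k] by (intro lenS_le) auto
      then show ?thesis using ge n_def j k pre(3) by simp
    qed
  qed
  have f: "ev us (alpha s) = (\<lambda>u. Sq (cc s t) (Suc n) * alpha (if even n then s else t) u +
      Sq (cc s t) n * alpha (if even n then t else s) u)"
    unfolding ua by (rule alt_formula[OF st])
  show ?thesis
  proof (cases "even n")
    case True then show ?thesis using f nn by (intro exI[of _ "Sq (cc s t) (Suc n)"] exI[of _ "Sq (cc s t) n"]) auto
  next
    case False then show ?thesis using f nn
      by (intro exI[of _ "Sq (cc s t) n"] exI[of _ "Sq (cc s t) (Suc n)"]) (auto simp: add.commute)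
  qed
qed

end



context cox begin

abbreviation len where "len f \<equiv> lenS UNIV f"

lemma humph_aux:
  "\<forall>ws s. len (ev ws) = n \<longrightarrow> len (ev ws \<circ> r s) \<ge> n \<longrightarrow> nonneg (ev ws (alpha s))"
proof (induction n rule: less_induct)
  case (less n)
  show ?case
  proof (rule allI, rule allI, rule impI, rule impI)
    fix ws s
    assume ln: "len (ev ws) = n" and ge: "len (ev ws \<circ> r s) \<ge> n"
    define w where "w = ev ws"
    show "nonneg (ev ws (alpha s))"
    proof (cases "n = 0")
      case True
      obtain ws0 where "length ws0 = 0" "ev ws0 = ev ws" using lenS_ex[of ws UNIV] ln True by auto
      then have "ev ws = id" by simp
      then show ?thesis by (simp add: alpha_def)
    next
      case False
      obtain ws0 where ws0: "length ws0 = n" "ev ws0 = w" using lenS_ex[of ws UNIV] ln w_def by auto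
      have ne: "ws0 \<noteq> []" using ws0 False by auto
      define t where "t = last ws0"
      define vs0 where "vs0 = butlast ws0"
      have wsplit: "ws0 = vs0 @ [t]" using ne t_def vs0_def by simp
      have lvs0: "length vs0 = n - 1" using ws0 vs0_def by simp
      have wrt: "w \<circ> r t = ev vs0" using ws0(2) wsplit ev_snoc_r by metis
      have st: "t \<noteq> s"
      proof
        assume "t = s"
        then have "len (ev ws \<circ> r s) \<le> length vs0" using wrt w_def by (intro lenS_le) auto
        then show False using ge lvs0 False by simp
      qed
      let ?I = "{s, t}"
      define P where "P = (\<lambda>(vs, us). set us \<subseteq> ?I \<and> ev vs \<circ> ev us = w \<and> length vs + length us = n)"
      have P0: "P (vs0, [t])" using wsplit ws0 lvs0 False unfolding P_def by auto
      obtain p where Pp: "P p" and pmin: "\<And>q. P q \<Longrightarrow> length (fst p) \<le> length (fst q)"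
        using ex_has_least_nat[of P "(vs0, [t])" "\<lambda>p. length (fst p)", OF P0] by blast
      obtain vs us where p: "p = (vs, us)" by (cases p)
      have us: "set us \<subseteq> ?I" and wv: "ev vs \<circ> ev us = w" and lsum: "length vs + length us = n"
        using Pp p P_def by auto
      have lw: "len w = n" using ln w_def by simp
      have nle: "\<And>zs. ev zs = w \<Longrightarrow> n \<le> length zs"
        using lw lenS_le[of _ UNIV] by fastforce
      have lvs_n: "length vs < n"
        using pmin[OF P0] p lvs0 False by simp
      have lenvs: "len (ev vs) = length vs"
      proof -
        obtain vs' where vs': "length vs' = len (ev vs)" "ev vs' = ev vs" using lenS_ex[of vs UNIV] by auto
        have "ev (vs' @ us) = w" using vs' wv by simp
        then have "n \<le> length vs' + length us" using nle by fastforce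
        moreover have "len (ev vs) \<le> length vs" by (rule lenS_le) auto
        ultimately show ?thesis using vs' lsum by simp
      qed
      have ge_c: "len (ev vs \<circ> r c) \<ge> length vs" if c: "c \<in> ?I" for c
      proof (rule ccontr)
        assume "\<not> len (ev vs \<circ> r c) \<ge> length vs"
        then have lt: "len (ev vs \<circ> r c) < length vs" by simp
        obtain vs' where vs': "length vs' = len (ev vs \<circ> r c)" "ev vs' = ev vs \<circ> r c"
          using lenS_ex[of "vs @ [c]" UNIV] by auto
        have e: "ev (vs' @ (c # us)) = w" using vs' wv by (simp add: comp_assoc)
        then have "n \<le> length vs' + Suc (length us)" using nle by fastforce
        then have "P (vs', c # us)" using e lt vs' lsum us c unfolding P_def by auto
        then have "length vs \<le> length vs'" using pmin p by fastforce
        then show False using lt vs' by simp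
      qed
      have H: "\<forall>ws s. len (ev ws) = length vs \<longrightarrow> len (ev ws \<circ> r s) \<ge> length vs \<longrightarrow> nonneg (ev ws (alpha s))"
        by (rule less.IH[OF lvs_n])
      have IHs: "nonneg (ev vs (alpha s))"
        using H lenvs ge_c[of s] by blast
      have IHt: "nonneg (ev vs (alpha t))"
        using H lenvs ge_c[of t] by blast
      have redI: "length us = lenS ?I (ev us)"
      proof -
        obtain us' where us': "set us' \<subseteq> ?I" "length us' = lenS ?I (ev us)" "ev us' = ev us"
          using lenS_ex[OF us] by auto
        have "ev (vs @ us') = w" using us' wv by simp
        then have "n \<le> length vs + length us'" using nle by fastforce
        moreover have "lenS ?I (ev us) \<le> length us" by (rule lenS_le[OF us]) simp
        ultimately show ?thesis using us' lsum by simp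
      qed
      have geI: "lenS ?I (ev us \<circ> r s) \<ge> length us"
      proof (rule ccontr)
        assume "\<not> lenS ?I (ev us \<circ> r s) \<ge> length us"
        then have lt: "lenS ?I (ev us \<circ> r s) < length us" by simp
        have "set (us @ [s]) \<subseteq> ?I" using us by auto
        then obtain us' where us': "set us' \<subseteq> ?I" "length us' = lenS ?I (ev us \<circ> r s)" "ev us' = ev us \<circ> r s"
          using lenS_ex[of "us @ [s]" ?I] by auto
        have "ev (vs @ us') = ev vs \<circ> ev us \<circ> r s" using us' by (simp add: comp_assoc)
        then have "ev (vs @ us') = ev ws \<circ> r s" using wv w_def by simp
        then have "len (ev ws \<circ> r s) \<le> length (vs @ us')" by (intro lenS_le) auto
        then show False using ge lt us' lsum by simp
      qed
      obtain x y where xy: "x \<ge> 0" "y \<ge> 0" "ev us (alpha s) = (\<lambda>u. x * alpha s u + y * alpha t u)"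
        using dih[OF st[symmetric] us redI geI] by blast
      have "ev ws (alpha s) = ev vs (ev us (alpha s))" using wv w_def by (metis comp_apply)
      also have "\<dots> = (\<lambda>u. x * ev vs (alpha s) u + y * ev vs (alpha t) u)"
        unfolding xy(3) by (rule ev_lin) simp_all
      finally have "ev ws (alpha s) = (\<lambda>u. x * ev vs (alpha s) u + y * ev vs (alpha t) u)" .
      then show ?thesis using xy IHs IHt by simp
    qed
  qed
qed

lemma root_sign: assumes "\<gamma> \<in> roots m" shows "nonneg \<gamma> \<or> nonneg (\<lambda>t. - \<gamma> t)"
proof -
  obtain ws s where g: "\<gamma> = ev ws (alpha s)" using assms roots_ev by blast
  show ?thesis
  proof (cases "len (ev ws \<circ> r s) \<ge> len (ev ws)")
    case True then show ?thesis using humph_aux g by blast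
  next
    case False
    have e: "ev (ws @ [s]) \<circ> r s = ev ws" by (rule ev_snoc_r)
    have "len (ev (ws @ [s]) \<circ> r s) \<ge> len (ev (ws @ [s]))" using False e by simp
    then have nn: "nonneg (ev (ws @ [s]) (alpha s))" using humph_aux by blast
    have "ev (ws @ [s]) (alpha s) = (\<lambda>t. - \<gamma> t)"
      using g by (simp add: r_self ev_neg)
    then show ?thesis using nn by auto
  qed
qed

end



lemma Sq_perp: assumes "sin th \<noteq> 0"
  shows "Sq (cos th) j - cos th * Sq (cos th) (Suc j) = - cos (real (Suc j) * th)"
proof -
  have e: "real j * th = real (Suc j) * th - th" by (simp add: algebra_simps)
  have "(Sq (cos th) j - cos th * Sq (cos th) (Suc j)) * sin th
      = sin (real j * th) - cos th * sin (real (Suc j) * th)"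
    using Sq_sin[of th j] Sq_sin[of th "Suc j"] by (simp add: algebra_simps)
  also have "\<dots> = - cos (real (Suc j) * th) * sin th"
    unfolding e sin_diff by (simp add: algebra_simps)
  finally show ?thesis using assms by (metis mult_cancel_right)
qed

lemma rev_alt: "rev (alt a b n) = (if even n then alt b a n else alt a b n)"
proof (induction n arbitrary: a b)
  case 0 then show ?case by simp
next
  case (Suc n)
  have "rev (alt a b (Suc n)) = b # rev (alt b a n)" unfolding alt_snoc by simp
  also have "\<dots> = b # (if even n then alt a b n else alt b a n)" using Suc by simp
  finally show ?case by auto
qed

context cox begin

lemma cc_bounds: assumes "a \<noteq> b" "m a b = enat K"
  shows "0 \<le> cc a b" "cc a b < 1" "cos (pi / real K) = cc a b" "sin (pi / real K) > 0" "K \<ge> 2"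
proof -
  have K: "K \<ge> 2" by (rule fin_K[OF assms])
  then show "K \<ge> 2" .
  have C: "cc a b = cos (pi / real K)" by (rule cc_fin[OF assms(2)])
  then show "cos (pi / real K) = cc a b" by simp
  have "0 < pi / real K" "pi / real K \<le> pi" using K by (auto simp: field_simps)
  then have "cos (pi / real K) < cos 0" by (subst cos_mono_less_eq) auto
  then show "cc a b < 1" using C by simp
  have "0 < pi / real K" "pi / real K \<le> pi / 2" using K by (auto simp: field_simps)
  then have "cos (pi / real K) \<ge> 0" by (intro cos_ge_zero) auto
  then show "0 \<le> cc a b" using C by simp
  have "pi / real K < pi" using K by (simp add: field_simps)
  then show "sin (pi / real K) > 0" using \<open>0 < pi / real K\<close> by (intro sin_gt_zero)
qed

lemma supp_single_norm: assumes "supp v \<subseteq> {c}" shows "bform m v v = (v c)^2"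
proof -
  have f: "fs v" using assms finite_subset by blast
  have "bform m v v = v c * sig c v" using B_sum[of "{c}" v v] assms f by simp
  also have "sig c v = v c" using sig_sum[of "{c}" v c] assms by simp
  finally show ?thesis by (simp add: power2_eq_square)
qed

lemma pos_step: assumes "\<beta> \<in> roots m" "nonneg \<beta>" "\<beta> \<noteq> alpha c"
  shows "nonneg (r c \<beta>)"
proof -
  have rr: "r c \<beta> \<in> roots m" using assms(1) by (rule root_r)
  show ?thesis
  proof (rule ccontr)
    assume nn: "\<not> nonneg (r c \<beta>)"
    then have np: "nonneg (\<lambda>t. - r c \<beta> t)" using root_sign[OF rr] by blast
    have z: "\<beta> t = 0" if "t \<noteq> c" for t
      using np[rule_format, of t] assms(2)[rule_format, of t] r_coord[OF that, of \<beta>] by simp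
    then have sp: "supp \<beta> \<subseteq> {c}" by (auto simp: supp_def)
    have "(\<beta> c)^2 = 1" using supp_single_norm[OF sp] root_norm[OF assms(1)] by simp
    then have "\<beta> c = 1" using assms(2) by (metis abs_of_nonneg power2_eq_1_iff abs_neg_one abs_of_neg not_le zero_le_one)
    then have "\<beta> = alpha c" using z by (auto simp: alpha_def)
    then show False using assms(3) by simp
  qed
qed

definition Pp :: "'a \<Rightarrow> ('a \<Rightarrow> real) set" where
  "Pp z = {\<beta> \<in> roots m. nonneg \<beta> \<and> bform m \<beta> (alpha z) = 0}"

lemma sig_two: "p \<noteq> q \<Longrightarrow> sig c (\<lambda>t. x * alpha p t + y * alpha q t) = x * bl c p + y * bl c q"
  by (simp add: sig_lin)

lemma odd_edge_lemma: assumes ab: "a \<noteq> b" "m a b = enat K" "odd K"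
  shows "ev (alt a b (K - 1)) (alpha a) = alpha b"
    "\<And>\<beta>. \<beta> \<in> Pp a \<Longrightarrow> ev (alt a b (K - 1)) \<beta> \<in> Pp b"
proof -
  note cb = cc_bounds[OF ab(1,2)]
  let ?C = "cc a b" and ?th = "pi / real K"
  obtain k where k: "K = Suc k" using cb(5) by (cases K) auto
  have ek: "even k" using ab(3) k by simp
  show e: "ev (alt a b (K - 1)) (alpha a) = alpha b"
    using alt_formula[OF ab(1), of k] Sq_vals[OF cb(5)] cb(3) k ek by (simp add: alpha_def)
  fix \<beta> assume \<beta>: "\<beta> \<in> Pp a"
  then have br: "\<beta> \<in> roots m" and bn: "nonneg \<beta>" and bp: "bform m \<beta> (alpha a) = 0"
    by (auto simp: Pp_def)
  have bf: "fs \<beta>" using root_fs[OF br] .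
  have step: "nonneg (ev (alt a b j) \<beta>)" if "j \<le> k" for j
    using that
  proof (induction j)
    case 0 then show ?case using bn by simp
  next
    case (Suc j)
    let ?p = "if even j then a else b" and ?q = "if even j then b else a"
    have nnj: "nonneg (ev (alt a b j) \<beta>)" using Suc by simp
    have ne: "ev (alt a b j) \<beta> \<noteq> alpha ?q"
    proof
      assume eq: "ev (alt a b j) \<beta> = alpha ?q"
      have "0 = bform m (ev (alt a b j) \<beta>) (ev (alt a b j) (alpha a))"
        using bp B_ev[OF bf fs_alpha] by simp
      also have "\<dots> = sig ?q (\<lambda>t. Sq ?C (Suc j) * alpha ?p t + Sq ?C j * alpha ?q t)"
        unfolding eq alt_formula[OF ab(1)] by simp
      also have "\<dots> = Sq ?C j - ?C * Sq ?C (Suc j)"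
        using ab(1) by (subst sig_two) (auto simp: bl_cc cc_sym)
      also have "\<dots> = - cos (real (Suc j) * ?th)"
        unfolding cb(3)[symmetric] by (rule Sq_perp) (use cb(4) in simp)
      finally have c0: "cos (real (Suc j) * ?th) = 0" by simp
      have "real (Suc j) * ?th = pi / 2"
      proof (rule cos_inj_pi)
        show "0 \<le> real (Suc j) * ?th" by simp
        show "real (Suc j) * ?th \<le> pi" using Suc.prems k by (simp add: field_simps)
      qed (use c0 in auto)
      then have "pi * real (2 * Suc j) = pi * real K" using cb(5) by (simp add: field_simps)
      then have "real (2 * Suc j) = real K" by simp
      then have "2 * Suc j = K" by (simp only: of_nat_eq_iff)
      then have "even K" by (metis dvd_triv_left)
      then show False using ab(3) by simp
    qed
    have "ev (alt a b (Suc j)) \<beta> = r ?q (ev (alt a b j) \<beta>)" by simp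
    then show ?case using pos_step[OF root_ev[OF br] nnj ne] by simp
  qed
  have "ev (alt a b (K - 1)) \<beta> \<in> roots m" by (rule root_ev[OF br])
  moreover have "nonneg (ev (alt a b (K - 1)) \<beta>)" using step[of k] k by simp
  moreover have "bform m (ev (alt a b (K - 1)) \<beta>) (alpha b) = 0"
    using B_ev[OF bf fs_alpha, of "alt a b (K - 1)" a] e bp by simp
  ultimately show "ev (alt a b (K - 1)) \<beta> \<in> Pp b" by (simp add: Pp_def)
qed

end



context cox begin

abbreviation Oc where "Oc x \<equiv> odd_component m x"

lemma path: assumes "(odd_edge m)\<^sup>*\<^sup>* x y"
  shows "\<exists>ws. set ws \<subseteq> Oc x \<and> ev ws (alpha x) = alpha y \<and> (\<forall>\<beta>\<in>Pp x. ev ws \<beta> \<in> Pp y)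
     \<and> (\<forall>\<beta>\<in>Pp y. ev (rev ws) \<beta> \<in> Pp x)"
  using assms
proof (induction rule: rtranclp_induct)
  case base then show ?case by (intro exI[of _ "[]"]) simp
next
  case (step y z)
  then obtain ws where ws: "set ws \<subseteq> Oc x" "ev ws (alpha x) = alpha y" "\<forall>\<beta>\<in>Pp x. ev ws \<beta> \<in> Pp y"
    "\<forall>\<beta>\<in>Pp y. ev (rev ws) \<beta> \<in> Pp x" by blast
  from step(2) obtain K where yz: "y \<noteq> z" "m y z = enat K" "odd K" "K \<ge> 3"
    by (auto simp: odd_edge_def)
  have zy: "z \<noteq> y" "m z y = enat K" using yz m_sym by auto
  let ?u = "alt y z (K - 1)"
  have ru: "rev ?u = alt z y (K - 1)" using rev_alt[of y z "K - 1"] yz(3,4) by simp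
  have yO: "y \<in> Oc x" using step(1) by (simp add: odd_component_def)
  have zO: "z \<in> Oc x" using step(1,2) by (simp add: odd_component_def)
  note E1 = odd_edge_lemma[OF yz(1-3)]
  note E2 = odd_edge_lemma[OF zy yz(3)]
  have "set (?u @ ws) \<subseteq> Oc x" using ws(1) alt_set[of y z "K - 1"] yO zO by auto
  moreover have "ev (?u @ ws) (alpha x) = alpha z" using ws(2) E1(1) by simp
  moreover have "\<forall>\<beta>\<in>Pp x. ev (?u @ ws) \<beta> \<in> Pp z" using ws(3) E1(2) by simp
  moreover have "\<forall>\<beta>\<in>Pp z. ev (rev (?u @ ws)) \<beta> \<in> Pp x" using ws(4) E2(2) ru by simp
  ultimately show ?case by blast
qed

lemma even_root: assumes ys: "y \<noteq> s" "m y s = enat K" "even K"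
  shows "\<exists>\<beta>0. \<beta>0 \<in> Pp y \<and> \<beta>0 s > 0 \<and> supp \<beta>0 \<subseteq> {y, s}"
proof -
  note cb = cc_bounds[OF ys(1,2)]
  let ?C = "cc y s" and ?th = "pi / real K"
  obtain n where n: "K = 2 * Suc n" using ys(3) cb(5)
    by (metis evenE Suc_pred' not_gr0 not_numeral_le_zero mult_0_right)
  define v where "v = (\<lambda>t. Sq ?C (Suc n) * alpha s t + Sq ?C n * alpha y t)"
  have sy: "s \<noteq> y" "m s y = enat K" using ys m_sym by auto
  have csy: "cc s y = ?C" by (rule cc_sym)
  have vroot: "v \<in> roots m"
  proof (cases "even n")
    case True
    have "ev (alt s y n) (alpha s) = v" unfolding v_def alt_formula[OF sy(1)] csy using True by simp
    then show ?thesis using roots_ev by blast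
  next
    case False
    have "ev (alt y s n) (alpha y) = v" unfolding v_def alt_formula[OF ys(1)] using False
      by (auto simp: add.commute)
    then show ?thesis using roots_ev by blast
  qed
  have C: "cos ?th = ?C" using cb(3) .
  have nn: "Sq ?C (Suc n) \<ge> 0" "Sq ?C n \<ge> 0"
    using Sq_nonneg_fin[OF cb(5), of "Suc n"] Sq_nonneg_fin[OF cb(5), of n] C n by auto
  have half: "real (Suc n) * ?th = pi / 2" using n by (simp add: field_simps)
  have pos: "Sq ?C (Suc n) > 0"
  proof -
    have s1: "sin (real (Suc n) * ?th) = 1" unfolding half by simp
    have "Sq (cos ?th) (Suc n) * sin ?th = 1" by (simp only: Sq_sin s1)
    then have "Sq ?C (Suc n) * sin ?th = 1" using C by simp
    then show ?thesis using cb(4) nn(1) by (metis less_eq_real_def mult_zero_left zero_neq_one)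
  qed
  have perp: "bform m v (alpha y) = 0"
  proof -
    have "bform m v (alpha y) = sig y v" by (rule B_alpha_right)
    also have "\<dots> = Sq ?C (Suc n) * bl y s + Sq ?C n * bl y y"
      unfolding v_def using ys(1) by (subst sig_two) auto
    also have "\<dots> = Sq ?C n - ?C * Sq ?C (Suc n)" by (simp add: bl_cc)
    also have "\<dots> = - cos (real (Suc n) * ?th)"
      unfolding C[symmetric] by (rule Sq_perp) (use cb(4) in simp)
    also have "\<dots> = 0" unfolding half by simp
    finally show ?thesis .
  qed
  have "v \<in> Pp y" using vroot perp nn by (auto simp: Pp_def v_def alpha_def)
  moreover have "v s > 0" using pos ys(1) by (simp add: v_def)
  moreover have "supp v \<subseteq> {y, s}" by (auto simp: v_def supp_def alpha_def)
  ultimately show ?thesis by blast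
qed

lemma uniq_aux: assumes ys: "y \<noteq> s" "m y s = enat K" and v: "v \<in> Pp y" "supp v \<subseteq> {y, s}"
  shows "v y = cc y s * v s" "(v s)^2 * (1 - (cc y s)^2) = 1"
proof -
  let ?C = "cc y s"
  have vr: "v \<in> roots m" and vp: "bform m v (alpha y) = 0" using v by (auto simp: Pp_def)
  have f: "fs v" using root_fs[OF vr] .
  have s1: "sig y v = v y * bl y y + v s * bl y s" using sig_sum[of "{y, s}" v y] v(2) ys(1) by simp
  have s2: "sig s v = v y * bl s y + v s * bl s s" using sig_sum[of "{y, s}" v s] v(2) ys(1) by simp
  have sy0: "sig y v = 0" using vp B_alpha_right by simp
  then show vy: "v y = ?C * v s" using s1 by (simp add: bl_cc)
  have "bform m v v = v y * sig y v + v s * sig s v" using B_sum[of "{y, s}" v v] v(2) f ys(1) by simp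
  then have "1 = v s * sig s v" using root_norm[OF vr] sy0 by simp
  also have "\<dots> = v s * (v s - ?C * v y)" using s2 by (simp add: bl_cc cc_sym)
  finally show "(v s)^2 * (1 - ?C^2) = 1" using vy by (simp add: power2_eq_square algebra_simps)
qed

lemma uniq: assumes ys: "y \<noteq> s" "m y s = enat K" and v: "v \<in> Pp y" "supp v \<subseteq> {y, s}"
  and w: "w \<in> Pp y" "supp w \<subseteq> {y, s}"
  shows "v = w"
proof -
  note cb = cc_bounds[OF ys]
  let ?C = "cc y s"
  note a1 = uniq_aux[OF ys v] and a2 = uniq_aux[OF ys w]
  have d: "1 - ?C^2 \<noteq> 0"
  proof -
    have "?C * ?C < 1 * 1" by (rule mult_strict_mono) (use cb(1,2) in auto)
    then have "?C^2 < 1" by (simp add: power2_eq_square)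
    then show ?thesis by simp
  qed
  have "(v s)^2 = (w s)^2" using a1(2) a2(2) d by (metis mult_right_cancel)
  moreover have "v s \<ge> 0" "w s \<ge> 0" using v(1) w(1) by (auto simp: Pp_def)
  ultimately have vs: "v s = w s" by simp
  then have vy: "v y = w y" using a1(1) a2(1) by simp
  show ?thesis
  proof (rule ext)
    fix t show "v t = w t"
    proof (cases "t \<in> {y, s}")
      case True then show ?thesis using vs vy by auto
    next
      case False then have "v t = 0" "w t = 0" using v(2) w(2) by (auto simp: supp_def)
      then show ?thesis by simp
    qed
  qed
qed

end



context cox begin

lemma gamma_exists: assumes sO: "s \<notin> Oc x" and yO: "y \<in> Oc x" and fin: "m y s < \<infinity>"
  shows "\<exists>\<gamma>. \<gamma> \<in> Pi_perp m UNIV x \<and> \<gamma> s > 0"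
proof -
  obtain K where K: "m y s = enat K" using fin by (cases "m y s") auto
  have ys: "y \<noteq> s" using sO yO by auto
  have K2: "K \<ge> 2" by (rule fin_K[OF ys K])
  have ev: "even K"
  proof (rule ccontr)
    assume o: "\<not> even K"
    have "K \<noteq> 2" using o by auto
    then have "K \<ge> 3" using K2 by simp
    then have "odd_edge m y s" using ys K o by (auto simp: odd_edge_def)
    then have "s \<in> Oc x" using yO by (auto simp: odd_component_def)
    then show False using sO by simp
  qed
  obtain \<beta>0 where b0: "\<beta>0 \<in> Pp y" "\<beta>0 s > 0" "supp \<beta>0 \<subseteq> {y, s}"
    using even_root[OF ys K ev] by blast
  have "(odd_edge m)\<^sup>*\<^sup>* x y" using yO by (simp add: odd_component_def)
  then obtain ws where ws: "set ws \<subseteq> Oc x" "ev ws (alpha x) = alpha y" "\<forall>\<beta>\<in>Pp x. ev ws \<beta> \<in> Pp y"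
    "\<forall>\<beta>\<in>Pp y. ev (rev ws) \<beta> \<in> Pp x" using path by blast
  define \<gamma> where "\<gamma> = ev (rev ws) \<beta>0"
  have gP: "\<gamma> \<in> Pp x" using ws(4) b0(1) \<gamma>_def by simp
  have "s \<notin> set (rev ws)" using ws(1) sO by auto
  then have gs: "\<gamma> s = \<beta>0 s" unfolding \<gamma>_def by (rule ev_coord)
  have ewg: "ev ws \<gamma> = \<beta>0" unfolding \<gamma>_def by simp
  have notcomb: "\<not> pos_comb_of_two (perp_roots m UNIV x \<inter> pos_roots m) \<gamma>"
  proof
    assume "pos_comb_of_two (perp_roots m UNIV x \<inter> pos_roots m) \<gamma>"
    then obtain F c where F: "finite F" "F \<subseteq> perp_roots m UNIV x \<inter> pos_roots m" "card F \<ge> 2"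
      "\<forall>\<beta>\<in>F. c \<beta> > 0" "\<gamma> = (\<lambda>t. \<Sum>\<beta>\<in>F. c \<beta> * \<beta> t)"
      unfolding pos_comb_of_two_def by blast
    have FP: "\<beta> \<in> Pp x" if "\<beta> \<in> F" for \<beta>
      using F(2) that by (auto simp: Pp_def perp_roots_def roots_on_def pos_roots_def)
    have Ffs: "fs \<beta>" if "\<beta> \<in> F" for \<beta> using FP[OF that] root_fs by (auto simp: Pp_def)
    have FPy: "ev ws \<beta> \<in> Pp y" if "\<beta> \<in> F" for \<beta> using ws(3) FP[OF that] by blast
    have "\<beta>0 = ev ws (\<lambda>t. \<Sum>\<beta>\<in>F. c \<beta> * \<beta> t)" using ewg F(5) by simp
    also have "\<dots> = (\<lambda>t. \<Sum>\<beta>\<in>F. c \<beta> * ev ws \<beta> t)" by (rule ev_setsum[OF F(1) Ffs])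
    finally have b0sum: "\<beta>0 = (\<lambda>t. \<Sum>\<beta>\<in>F. c \<beta> * ev ws \<beta> t)" .
    have eq: "ev ws \<beta> = \<beta>0" if b: "\<beta> \<in> F" for \<beta>
    proof (rule uniq[OF ys K FPy[OF b] _ b0(1) b0(3)])
      show "supp (ev ws \<beta>) \<subseteq> {y, s}"
      proof
        fix t assume t: "t \<in> supp (ev ws \<beta>)"
        show "t \<in> {y, s}"
        proof (rule ccontr)
          assume tn: "t \<notin> {y, s}"
          then have "\<beta>0 t = 0" using b0(3) by (auto simp: supp_def)
          then have z: "(\<Sum>\<beta>\<in>F. c \<beta> * ev ws \<beta> t) = 0" using fun_cong[OF b0sum, of t] by simp
          have nn: "\<And>\<beta>'. \<beta>' \<in> F \<Longrightarrow> 0 \<le> c \<beta>' * ev ws \<beta>' t"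
            using F(4) FPy by (fastforce simp: Pp_def intro: mult_nonneg_nonneg less_imp_le)
          have "\<forall>\<beta>'\<in>F. c \<beta>' * ev ws \<beta>' t = 0"
            using sum_nonneg_eq_0_iff[of F "\<lambda>\<beta>'. c \<beta>' * ev ws \<beta>' t"] F(1) nn z by simp
          then have "c \<beta> * ev ws \<beta> t = 0" using b by blast
          then have "ev ws \<beta> t = 0" using F(4) b by auto
          then show False using t by (simp add: supp_def)
        qed
      qed
    qed
    have "\<beta> = \<gamma>" if "\<beta> \<in> F" for \<beta>
      using eq[OF that] \<gamma>_def ev_rev1[of ws \<beta>] by simp
    then have "F \<subseteq> {\<gamma>}" by auto
    then have "card F \<le> 1" using card_mono[of "{\<gamma>}" F] by simp
    then show False using F(3) by simp
  qed
  have "\<gamma> \<in> Pi_perp m UNIV x" using gP notcomb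
    by (auto simp: Pi_perp_def Pp_def perp_roots_def roots_on_def pos_roots_def)
  then show ?thesis using gs b0(2) by auto
qed

lemma refl_self: "\<gamma> \<in> roots m \<Longrightarrow> refl m \<gamma> \<gamma> t = - \<gamma> t"
  using root_norm[of \<gamma>] by (simp add: refl_def)

theorem main: assumes fin: "finite (R_perp m UNIV x - R_perp m (Oc x) x)"
  shows "finite {s. s \<notin> Oc x \<and> (\<exists>y \<in> Oc x. m y s < \<infinity>)}"
proof -
  define E where "E = {s. s \<notin> Oc x \<and> (\<exists>y \<in> Oc x. m y s < \<infinity>)}"
  have "\<forall>s\<in>E. \<exists>\<gamma>. \<gamma> \<in> Pi_perp m UNIV x \<and> \<gamma> s > 0"
    using gamma_exists unfolding E_def by blast
  then obtain g where g: "\<And>s. s \<in> E \<Longrightarrow> g s \<in> Pi_perp m UNIV x \<and> g s s > 0"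
    using bchoice by metis
  have groot: "g s \<in> roots m" if "s \<in> E" for s
    using g[OF that] by (auto simp: Pi_perp_def perp_roots_def roots_on_def)
  define h where "h = (\<lambda>s. refl m (g s))"
  have himg: "h ` E \<subseteq> R_perp m UNIV x - R_perp m (Oc x) x"
  proof
    fix \<rho> assume "\<rho> \<in> h ` E"
    then obtain s where s: "s \<in> E" "\<rho> = h s" by blast
    have "\<rho> \<in> R_perp m UNIV x" using g[OF s(1)] s(2) by (auto simp: h_def R_perp_def)
    moreover have "\<rho> \<notin> R_perp m (Oc x) x"
    proof
      assume "\<rho> \<in> R_perp m (Oc x) x"
      then obtain \<gamma>' where g': "\<gamma>' \<in> Pi_perp m (Oc x) x" "\<rho> = refl m \<gamma>'" by (auto simp: R_perp_def)
      have "supp \<gamma>' \<subseteq> Oc x" using g'(1) by (auto simp: Pi_perp_def perp_roots_def roots_on_def)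
      moreover have sO: "s \<notin> Oc x" using s(1) by (simp add: E_def)
      ultimately have "\<gamma>' s = 0" by (auto simp: supp_def)
      then have "refl m \<gamma>' (g s) s = g s s" by (simp add: refl_def)
      moreover have "refl m (g s) (g s) s = - g s s" using refl_self[OF groot[OF s(1)]] .
      ultimately have "g s s = - g s s" using g'(2) s(2) h_def by metis
      then show False using g[OF s(1)] by simp
    qed
    ultimately show "\<rho> \<in> R_perp m UNIV x - R_perp m (Oc x) x" by simp
  qed
  have fh: "finite (h ` E)" using finite_subset[OF himg fin] .
  define rep where "rep = (\<lambda>\<rho>. SOME s0. s0 \<in> E \<and> h s0 = \<rho>)"
  have "E \<subseteq> (\<Union>\<rho>\<in>h ` E. supp (g (rep \<rho>)))"
  proof
    fix s assume s: "s \<in> E"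
    have "\<exists>s0. s0 \<in> E \<and> h s0 = h s" using s by blast
    then have r: "rep (h s) \<in> E" "h (rep (h s)) = h s" unfolding rep_def by (metis (mono_tags, lifting) someI_ex)+
    define s' where "s' = rep (h s)"
    have "g s' s \<noteq> 0"
    proof
      assume z: "g s' s = 0"
      have "refl m (g s') (g s) s = g s s" using z by (simp add: refl_def)
      moreover have "refl m (g s) (g s) s = - g s s" using refl_self[OF groot[OF s]] .
      moreover have "refl m (g s') = refl m (g s)" using r(2) s'_def h_def by simp
      ultimately have "g s s = - g s s" by metis
      then show False using g[OF s] by simp
    qed
    then show "s \<in> (\<Union>\<rho>\<in>h ` E. supp (g (rep \<rho>)))" using s s'_def by (auto simp: supp_def)
  qed
  moreover have "finite (\<Union>\<rho>\<in>h ` E. supp (g (rep \<rho>)))"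
  proof (rule finite_UN_I[OF fh])
    fix \<rho> assume "\<rho> \<in> h ` E"
    then obtain s where "s \<in> E" "\<rho> = h s" by blast
    then have "rep \<rho> \<in> E" unfolding rep_def by (metis (mono_tags, lifting) someI_ex)
    then show "finite (supp (g (rep \<rho>)))" using root_fs[OF groot] by blast
  qed
  ultimately show ?thesis unfolding E_def[symmetric] by (rule finite_subset)
qed

end


theorem corollary4p10:
  fixes m :: "'a \<Rightarrow> 'a \<Rightarrow> enat" and x :: 'a
  assumes "coxeter_matrix m"
    and "finite (R_perp m UNIV x - R_perp m (odd_component m x) x)"
  shows "finite {s. s \<notin> odd_component m x \<and> (\<exists>y \<in> odd_component m x. m y s < \<infinity>)}"
proof -
  interpret cox m by (rule cox.intro) (rule assms(1))
  show ?thesis using main[OF assms(2)] .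
qed

end
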